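(* Let $e\in\mathcal{PA}_n$ with $\mathrm{asc}(e)=k$. Then $e$ avoids the pattern $\underline{12}0$ if and only if its tail sequence $\mathbf{t}(e)$, which is an element of $\mathbf{I}_{k+1}$, is non-decreasing.
   Context: An inversion sequence of length $n$ is an integer sequence $e=e_1\ldots e_n$ with $0\leq e_i<i$; their set is $\mathbf{I}_n$. $\mathrm{asc}(e_1\ldots e_i)=|\{\ell\in[i-1]:e_\ell<e_{\ell+1}\}|$. An ascent sequence is an $e\in\mathbf{I}_n$ with $e_{i+1}\leq\mathrm{asc}(e_1\ldots e_i)+1$ for all $1\le i<n$. It is primitive if $e_i\neq e_{i+1}$ for all $i\in[n-1]$; $\mathcal{PA}_n$ denotes the set of primitive ascent sequences of length $n$. For a primitive ascent sequence $e$, partition $e$ uniquely into maximal strictly decreasing consecutive blocks called runs (e.g. $0102324325=0/10/2/32/432/5$); the tail sequence $\mathbf{t}(e)$ is the sequence of least (i.e. last) entries of the runs, in order (e.g. $002225$). A sequence $e$ avoids $\underline{12}0$ if there are no indices $2\leq i<j\leq n$ with $e_j<e_{i-1}<e_i$. *)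

theory Defs
  imports Main
begin

text \<open>Sequences are lists of naturals, 0-indexed: the paper's e_i is e ! (i-1).\<close>

definition inv_seqs :: "nat \<Rightarrow> nat list set" where
  "inv_seqs n = {e. length e = n \<and> (\<forall>i<n. e ! i < Suc i)}"

definition asc :: "nat list \<Rightarrow> nat" where
  "asc e = card {l. Suc l < length e \<and> e ! l < e ! Suc l}"

definition is_ascent_seq :: "nat list \<Rightarrow> bool" where
  "is_ascent_seq e \<longleftrightarrow> e \<in> inv_seqs (length e) \<and>
     (\<forall>i. 0 < i \<and> i < length e \<longrightarrow> e ! i \<le> asc (take i e) + 1)"

definition is_primitive :: "nat list \<Rightarrow> bool" where
  "is_primitive e \<longleftrightarrow> (\<forall>i. Suc i < length e \<longrightarrow> e ! i \<noteq> e ! Suc i)"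

definition prim_ascent_seqs :: "nat \<Rightarrow> nat list set" where
  "prim_ascent_seqs n = {e. length e = n \<and> is_ascent_seq e \<and> is_primitive e}"

fun runs :: "nat list \<Rightarrow> nat list list" where
  "runs [] = []"
| "runs [x] = [[x]]"
| "runs (x # y # xs) =
     (let r = runs (y # xs) in if y < x then (x # hd r) # tl r else [x] # r)"

definition tail_seq :: "nat list \<Rightarrow> nat list" where
  "tail_seq e = map last (runs e)"

text \<open>Avoidance of the vincular pattern 12-0 (first two letters adjacent):
  no 2 \<le> i < j \<le> n with e_j < e_{i-1} < e_i.  With a = i-2, b = j-1 (0-indexed).\<close>
definition avoids_12_0 :: "nat list \<Rightarrow> bool" where
  "avoids_12_0 e \<longleftrightarrow>
     \<not> (\<exists>a b. Suc a < b \<and> b < length e \<and> e ! b < e ! a \<and> e ! a < e ! Suc a)"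

end

theory Submission
  imports Defs
begin

definition tP :: "nat list \<Rightarrow> nat \<Rightarrow> bool" where
  "tP e p \<longleftrightarrow> Suc p = length e \<or> e ! p \<le> e ! Suc p"

definition tpos :: "nat list \<Rightarrow> nat list" where
  "tpos e = filter (tP e) [0..<length e]"

lemma runs_nonempty: "xs \<noteq> [] \<Longrightarrow> runs xs \<noteq> []"
  by (induction xs rule: runs.induct) (auto simp: Let_def)

lemma in_tl_D: "x \<in> set (tl xs) \<Longrightarrow> x \<in> set xs"
  by (cases xs) auto

lemma runs_elems: "r \<in> set (runs xs) \<Longrightarrow> r \<noteq> []"
  by (induction xs arbitrary: r rule: runs.induct)
     (auto simp: Let_def split: if_splits dest: in_tl_D)

lemma tail_seq_tpos: "tail_seq e = map ((!) e) (tpos e)"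
proof (induction e rule: runs.induct)
  case 1
  then show ?case by (simp add: tail_seq_def tpos_def)
next
  case (2 x)
  then show ?case by (simp add: tail_seq_def tpos_def tP_def)
next
  case (3 x y xs)
  define r where "r = runs (y # xs)"
  have rne: "r \<noteq> []" unfolding r_def by (rule runs_nonempty) simp
  have hdne: "hd r \<noteq> []" using runs_elems[of "hd r" "y#xs"] rne unfolding r_def by simp
  have IH: "map last r = map ((!) (y#xs)) (filter (tP (y#xs)) [0..<Suc (length xs)])"
    using 3 unfolding r_def tail_seq_def tpos_def by simp
  have up: "[0..<length (x#y#xs)] = 0 # map Suc [0..<Suc (length xs)]"
    by (simp add: upt_conv_Cons map_Suc_upt del: upt_Suc)
  have cmp: "tP (x#y#xs) (Suc p) = tP (y#xs) p" for p
    by (auto simp: tP_def)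
  have t0: "tP (x#y#xs) 0 = (\<not> y < x)" by (auto simp: tP_def)
  have R: "map ((!) (x#y#xs)) (tpos (x#y#xs)) =
     (if y < x then [] else [x]) @ map ((!) (y#xs)) (filter (tP (y#xs)) [0..<Suc (length xs)])"
    unfolding tpos_def up by (simp add: filter_map cmp t0 comp_def del: upt_Suc)
  have L: "tail_seq (x#y#xs) = (if y < x then [] else [x]) @ map last r"
    using rne hdne unfolding tail_seq_def r_def[symmetric]
    by (cases r) (auto simp: Let_def r_def)
  show ?case using L R IH by simp
qed

lemma tpos_set: "set (tpos e) = {p. p < length e \<and> tP e p}"
  by (auto simp: tpos_def)

lemma tpos_sorted: "sorted_wrt (<) (tpos e)"
  unfolding tpos_def by (rule sorted_wrt_filter) (simp add: sorted_wrt_upt)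

lemma tpos_less: "i < j \<Longrightarrow> j < length (tpos e) \<Longrightarrow> tpos e ! i < tpos e ! j"
  using tpos_sorted sorted_wrt_nth_less by blast

lemma tpos_le_iff: "i < length (tpos e) \<Longrightarrow> j < length (tpos e) \<Longrightarrow>
   (tpos e ! i < tpos e ! j) = (i < j)"
  by (metis linorder_neq_iff order_less_asym tpos_less)

lemma asc_take: "j \<le> length e \<Longrightarrow>
  asc (take j e) = card {l. Suc l < j \<and> e ! l < e ! Suc l}"
  unfolding asc_def
  by (rule arg_cong[where f=card]) (auto simp: nth_take min_def)

lemma key:
  assumes "is_ascent_seq e" "j < length e"
  shows "e ! j \<le> card {l. l < j \<and> e ! l < e ! Suc l}"
  using assms(2)
proof (induction j)
  case 0
  then show ?case using assms(1) by (auto simp: is_ascent_seq_def inv_seqs_def)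
next
  case (Suc m)
  define A where "A m = {l. l < m \<and> e ! l < e ! Suc l}" for m
  have fin: "finite (A m)" for m unfolding A_def by simp
  have IH: "e ! m \<le> card (A m)" using Suc unfolding A_def by simp
  have as: "e ! Suc m \<le> card (A m) + 1"
    using assms(1) Suc.prems asc_take[of "Suc m" e] unfolding is_ascent_seq_def A_def
    by auto
  show ?case
  proof (cases "e ! m < e ! Suc m")
    case True
    then have "A (Suc m) = insert m (A m)" by (auto simp: A_def)
    moreover have "m \<notin> A m" by (simp add: A_def)
    ultimately have "card (A (Suc m)) = card (A m) + 1" using fin by simp
    then show ?thesis using as unfolding A_def by simp
  next
    case False
    have "A m \<subseteq> A (Suc m)" by (auto simp: A_def)
    then have "card (A m) \<le> card (A (Suc m))" using fin card_mono by blast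
    then show ?thesis using False IH unfolding A_def by simp
  qed
qed

lemma descend:
  assumes "b < length e"
  shows "\<exists>q. b \<le> q \<and> q < length e \<and> tP e q \<and> e ! q \<le> e ! b"
  using assms
proof (induction "length e - b" arbitrary: b rule: less_induct)
  case less
  show ?case
  proof (cases "tP e b")
    case True
    then show ?thesis using less.prems by auto
  next
    case False
    then have s: "Suc b < length e" "e ! Suc b < e ! b" using less.prems by (auto simp: tP_def)
    have d: "length e - Suc b < length e - b" using s by simp
    obtain q where "Suc b \<le> q \<and> q < length e \<and> tP e q \<and> e ! q \<le> e ! Suc b"
      using less.hyps[OF d s(1)] by blast
    then show ?thesis using s by (intro exI[of _ q]) auto
  qed
qed

theorem lemma2p1:
  fixes e :: "nat list" and n k :: nat
  assumes "n \<ge> 1"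
    and "e \<in> prim_ascent_seqs n"
    and "asc e = k"
  shows "tail_seq e \<in> inv_seqs (k + 1) \<and> (avoids_12_0 e \<longleftrightarrow> sorted (tail_seq e))"
proof -
  have len: "length e = n" and asq: "is_ascent_seq e" and prim: "is_primitive e"
    using assms(2) by (auto simp: prim_ascent_seqs_def)
  have prim': "Suc l < n \<Longrightarrow> e ! l \<noteq> e ! Suc l" for l using prim len
    by (auto simp: is_primitive_def)
  have setP: "set (tpos e) = insert (n - 1) {l. Suc l < n \<and> e ! l < e ! Suc l}"
    unfolding tpos_set len[symmetric] tP_def using assms(1) len prim'
    by (auto simp: le_less)
  have fa: "finite {l. Suc l < n \<and> e ! l < e ! Suc l}"
    by (rule finite_subset[of _ "{..<n}"]) auto
  have "length (tpos e) = card (set (tpos e))"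
    using tpos_sorted by (metis distinct_card strict_sorted_iff)
  also have "\<dots> = asc e + 1" unfolding setP asc_def len using assms(1) fa
    by (subst card_insert_disjoint) auto
  finally have ltp: "length (tpos e) = k + 1" using assms(3) by simp
  have bound: "e ! (tpos e ! i) < Suc i" if i: "i < length (tpos e)" for i
  proof -
    define p where "p = tpos e ! i"
    have pn: "p < n" using i nth_mem[OF i] tpos_set len unfolding p_def by auto
    have "{l. l < p \<and> e ! l < e ! Suc l} \<subseteq> (\<lambda>j. tpos e ! j) ` {..<i}"
    proof
      fix l assume l: "l \<in> {l. l < p \<and> e ! l < e ! Suc l}"
      then have "l \<in> set (tpos e)" using pn unfolding tpos_set len tP_def by auto
      then obtain j where j: "j < length (tpos e)" "tpos e ! j = l"
        by (auto simp: in_set_conv_nth)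
      then have "j < i" using tpos_le_iff[OF j(1) i] l unfolding p_def by auto
      then show "l \<in> (\<lambda>j. tpos e ! j) ` {..<i}" using j by auto
    qed
    then have "card {l. l < p \<and> e ! l < e ! Suc l} \<le> i"
      by (metis card_image_le card_lessThan finite_lessThan card_mono finite_imageI le_trans)
    moreover have "e ! p \<le> card {l. l < p \<and> e ! l < e ! Suc l}"
      using key[OF asq] pn len by simp
    ultimately show ?thesis unfolding p_def by simp
  qed
  have inv: "tail_seq e \<in> inv_seqs (k + 1)"
    unfolding inv_seqs_def tail_seq_tpos using ltp bound by auto
  have mem: "tpos e ! i \<in> set (tpos e)" if "i < length (tpos e)" for i
    using that by simp
  have memn: "tpos e ! i < n \<and> tP e (tpos e ! i)" if "i < length (tpos e)" for i
    using mem[OF that] unfolding tpos_set len by simp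
  have "avoids_12_0 e \<longleftrightarrow> sorted (tail_seq e)"
  proof
    assume av: "avoids_12_0 e"
    show "sorted (tail_seq e)"
      unfolding tail_seq_tpos sorted_iff_nth_Suc
    proof (intro allI impI, rule ccontr)
      fix i assume i: "Suc i < length (map ((!) e) (tpos e))"
        and nle: "\<not> map ((!) e) (tpos e) ! i \<le> map ((!) e) (tpos e) ! Suc i"
      define p where "p = tpos e ! i"
      define q where "q = tpos e ! Suc i"
      have i': "Suc i < length (tpos e)" using i by simp
      have pq: "p < q" unfolding p_def q_def using tpos_less[OF _ i'] by simp
      have qn: "q < n" "tP e p" using memn[OF i'] memn[of i] i' unfolding q_def p_def by auto
      have gt: "e ! q < e ! p" using nle i' unfolding p_def q_def by simp
      have sp: "Suc p < n" using pq qn by simp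
      have asc1: "e ! p < e ! Suc p" using qn(2) sp prim'[OF sp] len unfolding tP_def by auto
      have "q \<noteq> Suc p" using gt asc1 by auto
      then have "Suc p < q" using pq by simp
      then show False using av gt asc1 qn len unfolding avoids_12_0_def by blast
    qed
  next
    assume so: "sorted (tail_seq e)"
    show "avoids_12_0 e"
      unfolding avoids_12_0_def
    proof
      assume "\<exists>a b. Suc a < b \<and> b < length e \<and> e ! b < e ! a \<and> e ! a < e ! Suc a"
      then obtain a b where ab: "Suc a < b" "b < length e" "e ! b < e ! a" "e ! a < e ! Suc a"
        by blast
      have "a \<in> set (tpos e)" using ab unfolding tpos_set tP_def by auto
      then obtain i where i: "i < length (tpos e)" "tpos e ! i = a"
        by (auto simp: in_set_conv_nth)
      obtain q where q: "b \<le> q" "q < length e" "tP e q" "e ! q \<le> e ! b"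
        using descend[OF ab(2)] by blast
      have "q \<in> set (tpos e)" using q unfolding tpos_set by auto
      then obtain j where j: "j < length (tpos e)" "tpos e ! j = q"
        by (auto simp: in_set_conv_nth)
      have "i < j" using tpos_le_iff[OF i(1) j(1)] i j ab q by simp
      then have "e ! a \<le> e ! q" using so j i
        unfolding tail_seq_tpos sorted_iff_nth_mono_less by fastforce
      then show False using q ab by simp
    qed
  qed
  then show ?thesis using inv by blast
qed

end
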